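(* Let $C$ be a set of pairwise disjoint lines on ${\rm F}_5$ and put $C^i=C\cap\mathcal{L}^i$ for $i=0,1,2$, with $\#C^0\ge4$. Let $\{s,r\}=\{1,2\}$ and suppose $C^s=\{L^s_{a_0,b_0},\dots,L^s_{a_4,b_4}\}$ with $\#C^s=5$ and $\#C^r=4$. Then $\#\{a_0,\dots,a_4\}\ge3$.
   Context: ${\rm F}_5\subset\mathbb{P}^3(\mathbb{C})$ is the surface $x^5-y^5-z^5+w^5=0$. Let $\eta$ be a primitive 5th root of unity and $v=-1$. For $k,i\in\{0,\dots,4\}$ define $L^0_{k,i}:\{y=\eta^i x,\ w=\eta^k z\}$, $L^1_{k,i}:\{x=\eta^{k+i}z,\ y=\eta^i w\}$, $L^2_{k,i}:\{x=v\eta^i w,\ y=v\eta^{k+i}z\}$, and $\mathcal{L}^s=\{L^s_{k,i}\}_{k,i}$; these 75 lines are all the lines on ${\rm F}_5$. *)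

theory Defs
  imports Complex_Main
begin

text \<open>Points of P^3(C) are represented by their affine cones in C^4: a projective line
is the 2-dimensional linear subspace of C^4 cut out by two linear equations.
Two projective lines are disjoint iff their cones meet only in the origin.\<close>

type_synonym pt = "complex \<times> complex \<times> complex \<times> complex"

definition fermat5 :: "pt set" where
  "fermat5 = {(x,y,z,w). x^5 - y^5 - z^5 + w^5 = 0}"

definition v :: complex where "v = -1"

definition L0 :: "complex \<Rightarrow> nat \<Rightarrow> nat \<Rightarrow> pt set" where
  "L0 \<eta> k i = {(x,y,z,w). y = \<eta>^i * x \<and> w = \<eta>^k * z}"

definition L1 :: "complex \<Rightarrow> nat \<Rightarrow> nat \<Rightarrow> pt set" where
  "L1 \<eta> k i = {(x,y,z,w). x = \<eta>^(k+i) * z \<and> y = \<eta>^i * w}"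

definition L2 :: "complex \<Rightarrow> nat \<Rightarrow> nat \<Rightarrow> pt set" where
  "L2 \<eta> k i = {(x,y,z,w). x = v * \<eta>^i * w \<and> y = v * \<eta>^(k+i) * z}"

definition Lfam :: "nat \<Rightarrow> complex \<Rightarrow> nat \<Rightarrow> nat \<Rightarrow> pt set" where
  "Lfam s \<eta> k i = (if s = 0 then L0 \<eta> k i else if s = 1 then L1 \<eta> k i else L2 \<eta> k i)"

definition Lcal :: "nat \<Rightarrow> complex \<Rightarrow> pt set set" where
  "Lcal s \<eta> = {Lfam s \<eta> k i | k i. k < 5 \<and> i < 5}"

definition pairwise_disjoint_lines :: "pt set set \<Rightarrow> bool" where
  "pairwise_disjoint_lines C \<longleftrightarrow> (\<forall>L\<in>C. \<forall>M\<in>C. L \<noteq> M \<longrightarrow> L \<inter> M = {(0,0,0,0)})"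

end

theory Submission
  imports Defs
begin

lemma eta_mod: assumes "\<eta>^5 = (1::complex)" shows "\<eta>^n = \<eta>^(n mod 5)"
proof -
  have "\<eta>^n = \<eta>^(5*(n div 5) + n mod 5)" by simp
  also have "\<dots> = (\<eta>^5)^(n div 5) * \<eta>^(n mod 5)" by (simp only: power_add power_mult)
  finally show ?thesis using assms by simp
qed

lemma eta_cong: "\<eta>^5 = (1::complex) \<Longrightarrow> x mod 5 = y mod 5 \<Longrightarrow> \<eta>^x = \<eta>^y"
  using eta_mod by metis

lemma eta_nz: "\<eta>^5 = (1::complex) \<Longrightarrow> \<eta> \<noteq> 0" by auto

lemma cross12:
  assumes e: "\<eta>^5 = (1::complex)" and c: "(k+2*i) mod 5 = (k'+2*i') mod 5"
  shows "(\<eta>^(k+i), v*\<eta>^(k+2*i+4*i'), 1, v*\<eta>^(k+i+4*i')) \<in> L1 \<eta> k i \<inter> L2 \<eta> k' i'"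
    and "L1 \<eta> k i \<noteq> L2 \<eta> k' i'"
proof -
  have v2: "v*v = 1" by (simp add: v_def)
  have h1: "\<eta>^(k+i+5*i') = \<eta>^(k+i)" using e by (simp only: power_add power_mult) simp
  have cc: "(k+2*i+4*i') mod 5 = (k'+i') mod 5"
  proof -
    have "(k+2*i+4*i') mod 5 = ((k+2*i) mod 5 + 4*i') mod 5" by (simp add: mod_add_left_eq)
    also have "\<dots> = ((k'+2*i') mod 5 + 4*i') mod 5" using c by simp
    also have "\<dots> = (k'+2*i' + 4*i') mod 5" by (simp add: mod_add_left_eq)
    also have "k'+2*i' + 4*i' = (k'+i') + i' * 5" by simp
    also have "(k'+i' + i' * 5) mod 5 = (k'+i') mod 5" by (rule mod_mult_self1)
    finally show ?thesis .
  qed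
  have h2: "\<eta>^(k+2*i+4*i') = \<eta>^(k'+i')" using cc by (rule eta_cong[OF e])
  have "\<eta>^i * (v*\<eta>^(k+i+4*i')) = v*\<eta>^(k+2*i+4*i')"
  proof - have "k+2*i+4*i' = i + (k+i+4*i')" by simp
    then show ?thesis by (simp only: power_add) (simp add: algebra_simps) qed
  moreover have "v * \<eta>^i' * (v*\<eta>^(k+i+4*i')) = \<eta>^(k+i)"
  proof -
    have "v * \<eta>^i' * (v*\<eta>^(k+i+4*i')) = (v*v) * \<eta>^(k+i+5*i')"
    proof - have "k+i+5*i' = i' + (k+i+4*i')" by simp
      then show ?thesis by (simp only: power_add) (simp add: algebra_simps) qed
    then show ?thesis using v2 h1 by simp
  qed
  ultimately show "(\<eta>^(k+i), v*\<eta>^(k+2*i+4*i'), 1, v*\<eta>^(k+i+4*i')) \<in> L1 \<eta> k i \<inter> L2 \<eta> k' i'"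
    using h2 by (simp add: L1_def L2_def) metis
  have "(0, \<eta>^i, 0, 1) \<in> L1 \<eta> k i" by (simp add: L1_def)
  moreover have "(0, \<eta>^i, 0, 1) \<notin> L2 \<eta> k' i'" using eta_nz[OF e] by (simp add: L2_def v_def)
  ultimately show "L1 \<eta> k i \<noteq> L2 \<eta> k' i'" by blast
qed

lemma cross12':
  assumes e: "\<eta>^5 = (1::complex)" and c: "(k+2*i) mod 5 = (k'+2*i') mod 5"
  shows "\<exists>p. p \<noteq> (0,0,0,0) \<and> p \<in> L1 \<eta> k i \<and> p \<in> L2 \<eta> k' i'"
proof -
  let ?p = "(\<eta>^(k+i), v*\<eta>^(k+2*i+4*i'), 1::complex, v*\<eta>^(k+i+4*i'))"
  have "?p \<noteq> (0,0,0,0)" by simp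
  then show ?thesis using cross12(1)[OF e c] by blast
qed

lemma cross:
  assumes e: "\<eta>^5 = (1::complex)" and sr: "{s, r} = {1, 2::nat}"
    and c: "(k+2*i) mod 5 = (k'+2*i') mod 5"
  shows "\<exists>p. p \<noteq> (0,0,0,0) \<and> p \<in> Lfam s \<eta> k i \<inter> Lfam r \<eta> k' i'"
    and "Lfam s \<eta> k i \<noteq> Lfam r \<eta> k' i'"
proof -
  have "(s = 1 \<and> r = 2) \<or> (s = 2 \<and> r = 1)" using sr by (simp add: doubleton_eq_iff)
  then have "(\<exists>p. p \<noteq> (0,0,0,0) \<and> p \<in> Lfam s \<eta> k i \<inter> Lfam r \<eta> k' i') \<and> Lfam s \<eta> k i \<noteq> Lfam r \<eta> k' i'"
  proof
    assume "s = 1 \<and> r = 2"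
    then have eqs: "Lfam s \<eta> k i = L1 \<eta> k i" "Lfam r \<eta> k' i' = L2 \<eta> k' i'" by (simp_all add: Lfam_def)
    show ?thesis unfolding eqs using cross12'[OF e c] cross12(2)[OF e c] by blast
  next
    assume "s = 2 \<and> r = 1"
    then have eqs: "Lfam s \<eta> k i = L2 \<eta> k i" "Lfam r \<eta> k' i' = L1 \<eta> k' i'" by (simp_all add: Lfam_def)
    show ?thesis unfolding eqs using cross12'[OF e c[symmetric]] cross12(2)[OF e c[symmetric]] by blast
  qed
  then show "\<exists>p. p \<noteq> (0,0,0,0) \<and> p \<in> Lfam s \<eta> k i \<inter> Lfam r \<eta> k' i'"
    and "Lfam s \<eta> k i \<noteq> Lfam r \<eta> k' i'" by blast+
qed

lemma same_fam:
  assumes e: "\<eta>^5 = (1::complex)" and s: "s = 1 \<or> s = 2"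
    and c: "b = b' \<or> (a+b) mod 5 = (a'+b') mod 5"
  shows "\<exists>p. p \<noteq> (0,0,0,0) \<and> p \<in> Lfam s \<eta> a b \<inter> Lfam s \<eta> a' b'"
  using s
proof
  assume s1: "s = 1"
  show ?thesis using c
  proof
    assume "b = b'" then show ?thesis using s1
      by (intro exI[of _ "(0, \<eta>^b, 0, 1)"]) (simp add: Lfam_def L1_def)
  next
    assume h: "(a+b) mod 5 = (a'+b') mod 5"
    then have "\<eta>^(a+b) = \<eta>^(a'+b')" by (rule eta_cong[OF e])
    then show ?thesis using s1
      by (intro exI[of _ "(\<eta>^(a+b), 0, 1, 0)"]) (simp add: Lfam_def L1_def)
  qed
next
  assume s1: "s = 2"
  show ?thesis using c
  proof
    assume "b = b'" then show ?thesis using s1 eta_nz[OF e]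
      by (intro exI[of _ "(v*\<eta>^b, 0, 0, 1)"]) (simp add: Lfam_def L2_def)
  next
    assume h: "(a+b) mod 5 = (a'+b') mod 5"
    then have "\<eta>^(a+b) = \<eta>^(a'+b')" by (rule eta_cong[OF e])
    then show ?thesis using s1
      by (intro exI[of _ "(0, v*\<eta>^(a+b), 1, 0)"]) (simp add: Lfam_def L2_def)
  qed
qed

lemma five_cases: "(c::nat) < 5 \<Longrightarrow> c = 0 \<or> c = 1 \<or> c = 2 \<or> c = 3 \<or> c = 4" by arith

lemma ce_lem: "c < 5 \<Longrightarrow> d < 5 \<Longrightarrow> c \<noteq> d \<Longrightarrow> (c + (d + 5 - c) mod 5) mod 5 = (d::nat) \<and> (d + 5 - c) mod 5 \<noteq> (0::nat)"
  by (elim five_cases[elim_format] disjE) simp_all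

lemma t_lem: assumes "a0 < 5" shows "(a0 + 6*(k' + 2*i' + 5 - a0)) mod 5 = ((k'::nat) + 2*i') mod 5"
proof -
  define t where "t = k' + 2*i' + 5 - a0"
  have "a0 + t = k' + 2*i' + 5" using assms unfolding t_def by simp
  then have "a0 + 6*t = (k' + 2*i') + (t+1) * 5" by (simp add: algebra_simps)
  then show ?thesis unfolding t_def[symmetric] by (metis mod_mult_self1)
qed

lemma fin_gen:
  fixes x y e :: nat
  assumes "x < 5" "y < 5" "e < 5" "e \<noteq> 0"
  shows "\<exists>n. (x + n*e) mod 5 = y"
proof -
  have e4: "e^4 mod 5 = 1"
  proof -
    have "e = 1 \<or> e = 2 \<or> e = 3 \<or> e = 4" using assms by auto
    then show ?thesis by auto
  qed
  have "e^3 * e = e^4" by (simp add: eval_nat_numeral)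
  then have "(x + ((y + 5 - x) * e^3) * e) mod 5 = (x + (y + 5 - x) * e^4) mod 5"
    by (simp only: mult.assoc)
  also have "\<dots> = (x + (y + 5 - x) * (e^4 mod 5)) mod 5"
    by (metis mod_add_right_eq mod_mult_right_eq)
  also have "\<dots> = y" using assms e4 by simp
  finally show ?thesis by blast
qed

lemma comb:
  fixes a b :: "nat \<Rightarrow> nat"
  assumes ab: "\<forall>j<5. a j < 5 \<and> b j < 5"
    and ib: "inj_on b {0..<5}" and iab: "inj_on (\<lambda>j. (a j + b j) mod 5) {0..<5}"
    and card: "card (a ` {0..<5}) \<le> 2"
  shows "\<forall>j<5. a j = a 0"
proof (rule ccontr)
  assume "\<not> (\<forall>j<5. a j = a 0)"
  then obtain j0 where j0: "j0 < 5" "a j0 \<noteq> a 0" by auto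
  define c where "c = a 0"
  define d where "d = a j0"
  have cd: "c \<noteq> d" "c < 5" "d < 5" using j0 ab by (auto simp: c_def d_def)
  have bsurj: "b ` {0..<5} = {0..<5}"
  proof (rule card_subset_eq)
    show "b ` {0..<5} \<subseteq> {0..<5}" using ab by auto
    show "card (b ` {0..<5}) = card {0..<5::nat}" using card_image[OF ib] by simp
  qed simp
  have img: "a ` {0..<5} = {c, d}"
  proof -
    have sub: "{c, d} \<subseteq> a ` {0..<5}" using j0 by (auto simp: c_def d_def)
    have "card {c,d} = 2" using cd by simp
    then show ?thesis using card_seteq[OF _ sub] card by simp
  qed
  have vals: "\<forall>j<5. a j = c \<or> a j = d" using img by auto
  define e where "e = (d + 5 - c) mod 5"
  have ce: "(c + e) mod 5 = d" using ce_lem[OF cd(2,3,1)] unfolding e_def by blast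
  have e0: "e \<noteq> 0" "e < 5" using ce_lem[OF cd(2,3,1)] unfolding e_def by auto
  have step: "\<exists>j'<5. a j' = d \<and> b j' = (b j + e) mod 5" if j: "j < 5" "a j = d" for j
  proof -
    have "(b j + e) mod 5 \<in> b ` {0..<5}" using bsurj by auto
    then obtain j' where j': "j' < 5" "b j' = (b j + e) mod 5" by auto
    have "a j' = d"
    proof (rule ccontr)
      assume "a j' \<noteq> d"
      then have ac: "a j' = c" using vals j' by auto
      have "(a j' + b j') mod 5 = (c + e + b j) mod 5" using ac j' by (simp add: mod_add_right_eq add.assoc add.commute add.left_commute)
      also have "\<dots> = (d + b j) mod 5" using ce by (metis mod_add_left_eq)
      finally have "(a j' + b j') mod 5 = (a j + b j) mod 5" using j by simp
      then have "j' = j" using inj_onD[OF iab] j j' by (metis atLeastLessThan_iff zero_le)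
      then show False using ac j cd by simp
    qed
    then show ?thesis using j' by auto
  qed
  have iter: "\<exists>j<5. a j = d \<and> b j = (b j0 + n*e) mod 5" for n
  proof (induction n)
    case 0 then show ?case using j0 ab by (auto simp: d_def)
  next
    case (Suc n)
    then obtain j where j: "j < 5" "a j = d" "b j = (b j0 + n*e) mod 5" by auto
    from step[OF j(1,2)] obtain j' where j': "j' < 5" "a j' = d" "b j' = (b j + e) mod 5" by auto
    have "b j' = ((b j0 + n*e) mod 5 + e) mod 5" using j(3) j'(3) by simp
    also have "\<dots> = (b j0 + n*e + e) mod 5" by (simp add: mod_add_left_eq)
    also have "b j0 + n*e + e = b j0 + Suc n * e" by simp
    finally have "b j' = (b j0 + Suc n * e) mod 5" .
    then show ?case using j' by auto
  qed
  obtain n where n: "(b j0 + n*e) mod 5 = b 0" using fin_gen[of "b j0" "b 0" e] ab j0 e0 by auto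
  obtain j where j: "j < 5" "a j = d" "b j = b 0" using iter[of n] n by auto
  have "j = 0" using inj_onD[OF ib j(3)] j by auto
  then show False using j cd by (simp add: c_def)
qed

theorem lemma3p5:
  fixes \<eta> :: complex and C :: "pt set set" and s r :: nat and a b :: "nat \<Rightarrow> nat"
  assumes eta: "\<eta>^5 = 1" "\<eta> \<noteq> 1"
    and lines: "C \<subseteq> Lcal 0 \<eta> \<union> Lcal 1 \<eta> \<union> Lcal 2 \<eta>"
    and disj: "pairwise_disjoint_lines C"
    and C0: "card (C \<inter> Lcal 0 \<eta>) \<ge> 4"
    and sr: "{s, r} = {1, 2::nat}"
    and ab: "\<forall>j<5. a j < 5 \<and> b j < 5"
    and Cs: "C \<inter> Lcal s \<eta> = {Lfam s \<eta> (a j) (b j) | j. j < 5}"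
    and Cs5: "card (C \<inter> Lcal s \<eta>) = 5"
    and Cr4: "card (C \<inter> Lcal r \<eta>) = 4"
  shows "card (a ` {0..<5}) \<ge> 3"
proof (rule ccontr)
  assume "\<not> card (a ` {0..<5}) \<ge> 3"
  then have card2: "card (a ` {0..<5}) \<le> 2" by simp
  define f where "f = (\<lambda>j. Lfam s \<eta> (a j) (b j))"
  have Cs': "C \<inter> Lcal s \<eta> = f ` {0..<5}" unfolding Cs f_def by auto
  have injf: "inj_on f {0..<5}"
    using Cs5 unfolding Cs' by (simp add: inj_on_iff_eq_card)
  have s12: "s = 1 \<or> s = 2" using sr by (auto simp: doubleton_eq_iff)
  have inC: "f j \<in> C" if "j < 5" for j using Cs' that by auto
  have noint: "\<not> (b j = b j' \<or> (a j + b j) mod 5 = (a j' + b j') mod 5)"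
    if jj: "j < 5" "j' < 5" "j \<noteq> j'" for j j'
  proof
    assume h: "b j = b j' \<or> (a j + b j) mod 5 = (a j' + b j') mod 5"
    have ne: "f j \<noteq> f j'" using injf jj by (auto dest: inj_onD)
    have "f j \<inter> f j' = {(0,0,0,0)}" using disj ne inC jj unfolding pairwise_disjoint_lines_def by blast
    moreover obtain p where "p \<noteq> (0,0,0,0)" "p \<in> f j \<inter> f j'"
      using same_fam[OF eta(1) s12 h] unfolding f_def by blast
    ultimately show False by blast
  qed
  have ib: "inj_on b {0..<5}"
  proof (rule inj_onI)
    fix x y assume "x \<in> {0..<5::nat}" "y \<in> {0..<5::nat}" "b x = b y"
    then show "x = y" using noint[of x y] by auto
  qed
  have iab: "inj_on (\<lambda>j. (a j + b j) mod 5) {0..<5}"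
  proof (rule inj_onI)
    fix x y assume "x \<in> {0..<5::nat}" "y \<in> {0..<5::nat}" "(a x + b x) mod 5 = (a y + b y) mod 5"
    then show "x = y" using noint[of x y] by auto
  qed
  have const: "\<forall>j<5. a j = a 0" using comb[OF ab ib iab card2] .
  have bsurj: "b ` {0..<5} = {0..<5}"
  proof (rule card_subset_eq)
    show "b ` {0..<5} \<subseteq> {0..<5}" using ab by auto
    show "card (b ` {0..<5}) = card {0..<5::nat}" using card_image[OF ib] by simp
  qed simp
  have "C \<inter> Lcal r \<eta> \<noteq> {}" using Cr4 by auto
  then obtain M where M: "M \<in> C" "M \<in> Lcal r \<eta>" by auto
  then obtain k' i' where M': "M = Lfam r \<eta> k' i'" by (auto simp: Lcal_def)
  define t where "t = k' + 2*i' + 5 - a 0"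
  have "(t * 3) mod 5 \<in> b ` {0..<5}" using bsurj by auto
  then obtain j where j: "j < 5" "b j = (t*3) mod 5" by auto
  have a0: "a 0 < 5" using ab by auto
  have aj: "a j = a 0" using const j by blast
  have "(a j + 2 * b j) mod 5 = (a 0 + 2 * ((t*3) mod 5)) mod 5" using j aj by simp
  also have "\<dots> = (a 0 + (2*((t*3) mod 5)) mod 5) mod 5" by (rule mod_add_right_eq[symmetric])
  also have "\<dots> = (a 0 + (2*(t*3)) mod 5) mod 5" by (simp only: mod_mult_right_eq)
  also have "\<dots> = (a 0 + 6*t) mod 5" by (simp add: mod_add_right_eq)
  also have "\<dots> = (k' + 2*i') mod 5" unfolding t_def using t_lem[OF a0] .
  finally have cg: "(a j + 2 * b j) mod 5 = (k' + 2*i') mod 5" .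
  obtain p where p: "p \<noteq> (0,0,0,0)" "p \<in> f j \<inter> M"
    using cross(1)[OF eta(1) sr cg] unfolding f_def M' by blast
  have "f j \<noteq> M" using cross(2)[OF eta(1) sr cg] unfolding f_def M' .
  then have "f j \<inter> M = {(0,0,0,0)}" using disj inC[OF j(1)] M(1) unfolding pairwise_disjoint_lines_def by blast
  then show False using p by blast
qed

end
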